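(* Let $A\in\mathbb{R}^{n\times n}$ and $b\in\mathbb{R}^n$, and consider the generalized Newton method $x^{k+1}=(A-D(x^k))^{-1}b$ for the equation $Ax-|x|=b$. (a) If $A-I$ is a nonsingular $M$-matrix, then for every $x^0\in\mathbb{R}^n$ the iteration is well defined for all $k$, the equation has a unique solution $x^*$, and $x^k=x^*$ for all $k\ge n+2$. (b) If $A-I$ is an irreducible singular $M$-matrix, $v>0$ is a vector with $(A^T-I)v=0$, and $v^Tb<0$, then for every $x^0$ with $D(x^0)\neq I$ (i.e. $x^0$ has at least one nonpositive component) the iteration is well defined for all $k$, the equation has a unique solution $x^*$, and $x^k=x^*$ for all $k\ge n+1$.
   Context: For $x\in\mathbb{R}^n$, $|x|$ is the componentwise absolute value, $\mathrm{sign}(x)$ is the vector whose components are $1,0,-1$ according as the corresponding component of $x$ is positive, zero, negative, and $D(x)=\mathrm{diag}(\mathrm{sign}(x))$. A $Z$-matrix is a real square matrix whose off-diagonal entries are all nonpositive; any $Z$-matrix can be written $sI-B$ with $B\ge 0$ entrywise, and it is a nonsingular $M$-matrix if $s>\rho(B)$ and a singular $M$-matrix if $s=\rho(B)$, where $\rho$ is spectral radius. A square matrix $M$ is reducible if there is a permutation matrix $P$ with $P^TMP=\begin{bmatrix}M_{11}&M_{12}\\0&M_{22}\end{bmatrix}$ where $M_{11},M_{22}$ are square (nonempty) blocks; it is irreducible otherwise. If $A-I$ is an irreducible singular $M$-matrix, a vector $v>0$ with $(A^T-I)v=0$ exists and is unique up to a positive scalar multiple. *)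

theory Defs
  imports "HOL-Analysis.Analysis"
begin

definition vabs :: "real ^ 'n \<Rightarrow> real ^ 'n" where
  "vabs x = (\<chi> i. \<bar>x $ i\<bar>)"

definition vsign :: "real ^ 'n \<Rightarrow> real ^ 'n" where
  "vsign x = (\<chi> i. sgn (x $ i))"

definition Dmat :: "real ^ 'n \<Rightarrow> real ^ 'n ^ 'n" where
  "Dmat x = (\<chi> i j. if i = j then vsign x $ i else 0)"

definition spectral_radius :: "real ^ 'n ^ 'n \<Rightarrow> real" where
  "spectral_radius B =
     Max {cmod l | l. \<exists>v :: complex ^ 'n. v \<noteq> 0 \<and>
            (\<chi> i j. complex_of_real (B $ i $ j)) *v v = l *s v}"

definition nonneg_matrix :: "real ^ 'n ^ 'n \<Rightarrow> bool" where
  "nonneg_matrix B \<longleftrightarrow> (\<forall>i j. B $ i $ j \<ge> 0)"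

definition nonsingular_M_matrix :: "real ^ 'n ^ 'n \<Rightarrow> bool" where
  "nonsingular_M_matrix M \<longleftrightarrow>
     (\<exists>s B. nonneg_matrix B \<and> M = s *\<^sub>R mat 1 - B \<and> s > spectral_radius B)"

definition singular_M_matrix :: "real ^ 'n ^ 'n \<Rightarrow> bool" where
  "singular_M_matrix M \<longleftrightarrow>
     (\<exists>s B. nonneg_matrix B \<and> M = s *\<^sub>R mat 1 - B \<and> s = spectral_radius B)"

text \<open>Reducibility: after a simultaneous permutation of rows and columns the matrix
  has the block form [[M11, M12],[0, M22]] with square nonempty diagonal blocks.\<close>
definition reducible :: "'a::zero ^ 'n ^ 'n \<Rightarrow> bool" where
  "reducible M \<longleftrightarrow>
     (\<exists>I J. I \<noteq> {} \<and> J \<noteq> {} \<and> I \<inter> J = {} \<and> I \<union> J = UNIV \<and>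
        (\<forall>j\<in>J. \<forall>i\<in>I. M $ j $ i = 0))"

definition irreducible_mat :: "'a::zero ^ 'n ^ 'n \<Rightarrow> bool" where
  "irreducible_mat M \<longleftrightarrow> \<not> reducible M"

primrec gn_iter :: "real ^ 'n ^ 'n \<Rightarrow> real ^ 'n \<Rightarrow> real ^ 'n \<Rightarrow> nat \<Rightarrow> real ^ 'n" where
  "gn_iter A b x0 0 = x0"
| "gn_iter A b x0 (Suc k) = matrix_inv (A - Dmat (gn_iter A b x0 k)) *v b"

end

theory Submission
  imports Defs "HOL-Computational_Algebra.Polynomial"
begin


lemma no_kernel_big:
  fixes C :: "complex^'n^'n"
  defines "l0 \<equiv> complex_of_real (1 + (\<Sum>i\<in>UNIV. \<Sum>j\<in>UNIV. cmod (C$i$j)))"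
  assumes eq: "\<forall>i. (\<Sum>j\<in>UNIV. C$i$j * v$j) = l0 * v$i"
  shows "v = 0"
proof (rule ccontr)
  assume "v \<noteq> 0"
  have "Max (range (\<lambda>j. cmod (v$j))) \<in> range (\<lambda>j. cmod (v$j))"
    by (rule Max_in) auto
  then obtain i where ieq: "cmod (v$i) = Max (range (\<lambda>j. cmod (v$j)))" by (metis imageE)
  have imax: "cmod (v$j) \<le> cmod (v$i)" for j
    unfolding ieq by (rule Max_ge) auto
  obtain k where "v$k \<noteq> 0" using \<open>v \<noteq> 0\<close> by (auto simp: vec_eq_iff)
  then have "0 < cmod (v$k)" by simp
  then have vi: "cmod (v$i) > 0" using imax[of k] by linarith
  let ?S = "(\<Sum>i\<in>UNIV. \<Sum>j\<in>UNIV. cmod (C$i$j))"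
  let ?R = "(\<Sum>j\<in>UNIV. cmod (C$i$j))"
  have S0: "0 \<le> ?S" by (intro sum_nonneg) auto
  have "cmod l0 = 1 + ?S" unfolding l0_def norm_of_real using S0 by linarith
  then have h1: "cmod (l0 * v$i) = (1 + ?S) * cmod (v$i)"
    unfolding norm_mult by simp
  have h2: "cmod (\<Sum>j\<in>UNIV. C$i$j * v$j) \<le> ?R * cmod (v$i)"
  proof -
    have "cmod (\<Sum>j\<in>UNIV. C$i$j * v$j) \<le> (\<Sum>j\<in>UNIV. cmod (C$i$j * v$j))" by (rule norm_sum)
    also have "\<dots> \<le> (\<Sum>j\<in>UNIV. cmod (C$i$j) * cmod (v$i))"
      by (rule sum_mono) (simp add: norm_mult imax mult_left_mono)
    finally show ?thesis by (simp add: sum_distrib_right)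
  qed
  have h3: "?R \<le> ?S"
    by (rule member_le_sum) (auto intro: sum_nonneg)
  have h4: "?R * cmod (v$i) \<le> ?S * cmod (v$i)"
    using h3 by (rule mult_right_mono) simp
  have "cmod (\<Sum>j\<in>UNIV. C$i$j * v$j) = cmod (l0 * v$i)" using eq by simp
  then have "(1 + ?S) * cmod (v$i) \<le> ?S * cmod (v$i)" using h1 h2 h4 by linarith
  then have "cmod (v$i) \<le> 0" by (simp add: distrib_right)
  then show False using vi by simp
qed
lemma eig_finite:
  fixes C :: "complex^'n^'n"
  shows "finite {l. \<exists>v. v \<noteq> 0 \<and> C *v v = l *s v}"
proof -
  define P :: "complex poly ^'n^'n" where "P = (\<chi> i j. [:C$i$j:] - (if i = j then [:0,1:] else 0))"
  define Q :: "complex \<Rightarrow> complex^'n^'n" where "Q l = (\<chi> i j. C$i$j - (if i = j then l else 0))" for l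
  have ev: "poly (det P) l = det (Q l)" for l
  proof -
    have PQ: "poly (P$i$j) l = Q l$i$j" for i j by (simp add: P_def Q_def)
    show ?thesis unfolding det_def poly_sum poly_mult poly_prod poly_of_int PQ ..
  qed
  have Qv: "(Q l *v v)$i = (\<Sum>j\<in>UNIV. C$i$j * v$j) - l * v$i" for l v i
  proof -
    have "(Q l *v v)$i = (\<Sum>j\<in>UNIV. C$i$j * v$j - (if i = j then l * v$j else 0))"
      unfolding Q_def matrix_vector_mult_def by (auto intro!: sum.cong simp: left_diff_distrib)
    also have "\<dots> = (\<Sum>j\<in>UNIV. C$i$j * v$j) - l * v$i"
      by (simp add: sum_subtractf)
    finally show ?thesis .
  qed
  have inv_iff: "invertible (Q l) \<longleftrightarrow> (\<forall>x. Q l *v x = 0 \<longrightarrow> x = 0)" for l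
    by (simp add: invertible_left_inverse matrix_left_invertible_ker)
  have "det P \<noteq> 0"
  proof
    assume "det P = 0"
    define l0 where "l0 = complex_of_real (1 + (\<Sum>i\<in>UNIV. \<Sum>j\<in>UNIV. cmod (C$i$j)))"
    have "invertible (Q l0)"
      unfolding inv_iff
    proof (intro allI impI)
      fix x assume "Q l0 *v x = 0"
      then have "(Q l0 *v x)$i = 0" for i by simp
      then have "(\<Sum>j\<in>UNIV. C$i$j * x$j) - l0 * x$i = 0" for i unfolding Qv .
      then have "\<forall>i. (\<Sum>j\<in>UNIV. C$i$j * x$j) = l0 * x$i" by simp
      then show "x = 0" using no_kernel_big[of C x] unfolding l0_def by blast
    qed
    then have "det (Q l0) \<noteq> 0" by (simp add: invertible_det_nz)
    moreover have "det (Q l0) = 0" unfolding ev[symmetric] \<open>det P = 0\<close> by simp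
    ultimately show False by simp
  qed
  moreover have "{l. \<exists>v. v \<noteq> 0 \<and> C *v v = l *s v} \<subseteq> {x. poly (det P) x = 0}"
  proof safe
    fix l v assume "v \<noteq> 0" "C *v v = l *s v"
    then have "(C *v v)$i = (l *s v)$i" for i by simp
    then have "(\<Sum>j\<in>UNIV. C$i$j * v$j) = l * v$i" for i by (simp add: matrix_vector_mult_def)
    then have "Q l *v v = 0"
      by (simp add: vec_eq_iff Qv)
    then have "\<not> invertible (Q l)" using \<open>v \<noteq> 0\<close> inv_iff by blast
    then show "poly (det P) l = 0" by (simp add: ev invertible_det_nz)
  qed
  ultimately show ?thesis using poly_roots_finite finite_subset by blast
qed


lemma cont_Bv: "continuous_on X (\<lambda>z::real^'n. (B *v z)$i)" for B :: "real^'n^'n"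
  by (intro continuous_on_component linear_continuous_on matrix_vector_mul_bounded_linear)

lemma pf_fixpoint:
  fixes B :: "real^'n^'n"
  assumes B0: "\<forall>i j. 0 \<le> B$i$j" and y0: "\<forall>i. 0 \<le> y$i" and ynz: "y \<noteq> 0"
    and By: "\<forall>i. s * y$i \<le> (B *v y)$i"
  shows "\<exists>z c. (\<forall>i. 0 \<le> z$i) \<and> z \<noteq> 0 \<and> B *v z = c *\<^sub>R z \<and> s \<le> c"
proof -
  define S where "S = {z::real^'n. (\<forall>i. 0 \<le> z$i) \<and> sum (\<lambda>i. z$i) UNIV = 1 \<and> (\<forall>i. s * z$i \<le> (B *v z)$i)}"
  define den where "den z = sum (\<lambda>i. (B *v z + z)$i) UNIV" for z :: "real^'n"
  define f where "f z = inverse (den z) *\<^sub>R (B *v z + z)" for z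
  have Bnn: "0 \<le> (B *v z)$i" if "\<forall>i. 0 \<le> z$i" for z i
    using that B0 by (simp add: matrix_vector_mult_def sum_nonneg)
  have den1: "1 \<le> den z" if "z \<in> S" for z
  proof -
    have "den z = sum (\<lambda>i. (B *v z)$i) UNIV + sum (\<lambda>i. z$i) UNIV"
      unfolding den_def by (simp add: sum.distrib)
    moreover have "0 \<le> sum (\<lambda>i. (B *v z)$i) UNIV" using that Bnn by (simp add: S_def sum_nonneg)
    ultimately show ?thesis using that by (simp add: S_def)
  qed
  have closedS: "closed S"
  proof -
    have eq: "S = (\<Inter>i. {z. 0 \<le> z$i}) \<inter> {z. sum (\<lambda>i. z$i) UNIV = 1} \<inter> (\<Inter>i. {z. s * z$i \<le> (B *v z)$i})"
      unfolding S_def by auto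
    have c1: "closed {z::real^'n. 0 \<le> z$i}" for i
      by (intro closed_Collect_le continuous_intros)
    have c2: "closed {z::real^'n. sum (\<lambda>i. z$i) UNIV = 1}"
      by (intro closed_Collect_eq continuous_intros)
    have c3: "closed {z::real^'n. s * z$i \<le> (B *v z)$i}" for i
      by (intro closed_Collect_le continuous_intros cont_Bv)
    show ?thesis unfolding eq by (intro closed_Int closed_INT ballI c1 c2 c3)
  qed
  have boundedS: "bounded S"
  proof -
    have "S \<subseteq> cball 0 1"
    proof
      fix z assume "z \<in> S"
      then have "norm z \<le> sum (\<lambda>i. \<bar>z$i\<bar>) UNIV" by (simp add: norm_le_l1_cart)
      also have "\<dots> = 1" using \<open>z \<in> S\<close> by (simp add: S_def)
      finally show "z \<in> cball 0 1" by simp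
    qed
    then show ?thesis using bounded_cball bounded_subset by blast
  qed
  have convexS: "convex S"
    unfolding convex_def
  proof (intro ballI allI impI)
    fix x z :: "real^'n" and u v :: real
    assume xz: "x \<in> S" "z \<in> S" and uv: "0 \<le> u" "0 \<le> v" "u + v = 1"
    have c1: "\<forall>i. 0 \<le> (u *\<^sub>R x + v *\<^sub>R z)$i" using xz uv by (simp add: S_def)
    have c2: "sum (\<lambda>i. (u *\<^sub>R x + v *\<^sub>R z)$i) UNIV = 1"
      using xz uv by (simp add: S_def sum.distrib sum_distrib_left[symmetric])
    have c3: "s * (u *\<^sub>R x + v *\<^sub>R z)$i \<le> (B *v (u *\<^sub>R x + v *\<^sub>R z))$i" for i
    proof -
      have "s * x$i \<le> (B *v x)$i" "s * z$i \<le> (B *v z)$i" using xz by (auto simp: S_def)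
      then have "u * (s * x$i) \<le> u * (B *v x)$i" "v * (s * z$i) \<le> v * (B *v z)$i"
        using uv by (auto intro: mult_left_mono)
      then show ?thesis by (simp add: matrix_vector_right_distrib matrix_vector_mult_scaleR algebra_simps)
    qed
    show "u *\<^sub>R x + v *\<^sub>R z \<in> S" using c1 c2 c3 by (simp add: S_def)
  qed
  have sy: "0 < sum (\<lambda>i. y$i) UNIV"
  proof -
    obtain k where "y$k \<noteq> 0" using ynz by (auto simp: vec_eq_iff)
    then have "0 < y$k" using y0 by (auto simp: less_le)
    moreover have "y$k \<le> sum (\<lambda>i. y$i) UNIV" by (rule member_le_sum) (auto simp: y0)
    ultimately show ?thesis by linarith
  qed
  have nonempty: "S \<noteq> {}"
  proof -
    define y' where "y' = inverse (sum (\<lambda>i. y$i) UNIV) *\<^sub>R y"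
    have "y' \<in> S"
      unfolding S_def y'_def
    proof (intro CollectI conjI allI)
      fix i
      show "0 \<le> (inverse (sum (\<lambda>i. y$i) UNIV) *\<^sub>R y)$i" using y0 sy by simp
      show "s * (inverse (sum (\<lambda>i. y$i) UNIV) *\<^sub>R y)$i \<le> (B *v (inverse (sum (\<lambda>i. y$i) UNIV) *\<^sub>R y))$i"
        using By sy by (simp add: matrix_vector_mult_scaleR mult_left_mono mult.left_commute[of s])
    next
      show "(\<Sum>i\<in>UNIV. (inverse (sum (\<lambda>i. y$i) UNIV) *\<^sub>R y)$i) = 1"
        using sy by (simp add: sum_distrib_left[symmetric])
    qed
    then show ?thesis by blast
  qed
  have contf: "continuous_on S f"
  proof -
    have g: "continuous_on S (\<lambda>z. B *v z + z)"
      by (intro continuous_on_add continuous_on_id linear_continuous_on matrix_vector_mul_bounded_linear)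
    have "continuous_on S den" unfolding den_def
      by (intro continuous_on_sum continuous_on_component g)
    moreover have "\<forall>z\<in>S. den z \<noteq> 0" using den1 by fastforce
    ultimately have "continuous_on S (\<lambda>z. inverse (den z))" by (rule continuous_on_inverse)
    then show ?thesis unfolding f_def using g by (rule continuous_on_scaleR)
  qed
  have fS: "f \<in> S \<rightarrow> S"
  proof
    fix z assume z: "z \<in> S"
    have d: "0 < den z" using den1[OF z] by simp
    have zz: "\<forall>i. 0 \<le> z$i" "\<forall>i. s * z$i \<le> (B *v z)$i" using z by (auto simp: S_def)
    have e1: "\<forall>i. 0 \<le> (f z)$i" unfolding f_def using d zz Bnn[of z] by simp
    have e2: "sum (\<lambda>i. (f z)$i) UNIV = 1" unfolding f_def using d
      by (simp add: sum_distrib_left[symmetric] den_def)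
    have e3: "s * (f z)$i \<le> (B *v f z)$i" for i
    proof -
      have "s * (B *v z)$i \<le> (B *v (B *v z))$i"
      proof -
        have "s * (B *v z)$i = (\<Sum>j\<in>UNIV. B$i$j * (s * z$j))"
          by (simp add: matrix_vector_mult_def sum_distrib_left algebra_simps)
        also have "\<dots> \<le> (\<Sum>j\<in>UNIV. B$i$j * (B *v z)$j)"
          by (rule sum_mono) (use B0 zz in \<open>auto intro: mult_left_mono\<close>)
        also have "\<dots> = (B *v (B *v z))$i" by (simp add: matrix_vector_mult_def)
        finally show ?thesis .
      qed
      then have "s * (B *v z + z)$i \<le> (B *v (B *v z + z))$i"
        using zz(2)[rule_format, of i] by (simp add: matrix_vector_right_distrib algebra_simps)
      then show ?thesis unfolding f_def using d
        by (simp add: matrix_vector_mult_scaleR mult_left_mono mult.left_commute[of s])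
    qed
    show "f z \<in> S" using e1 e2 e3 by (simp add: S_def)
  qed
  obtain z where zS: "z \<in> S" and fz: "f z = z"
    using brouwer[OF compact_eq_bounded_closed[THEN iffD2, OF conjI[OF boundedS closedS]] convexS nonempty contf fS] by blast
  have d: "1 \<le> den z" using den1[OF zS] .
  have eig: "B *v z + z = den z *\<^sub>R z"
  proof -
    have "den z *\<^sub>R f z = B *v z + z" unfolding f_def using d by simp
    then show ?thesis using fz by simp
  qed
  then have eig2: "B *v z = (den z - 1) *\<^sub>R z" by (simp add: algebra_simps)
  have zz: "\<forall>i. 0 \<le> z$i" "sum (\<lambda>i. z$i) UNIV = 1" "\<forall>i. s * z$i \<le> (B *v z)$i" using zS by (auto simp: S_def)
  have znz: "z \<noteq> 0" using zz(2) by auto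
  obtain k where "z$k \<noteq> 0" using znz by (auto simp: vec_eq_iff)
  then have zk: "0 < z$k" using zz(1) by (auto simp: less_le)
  have "(B *v z)$k = (den z - 1) * z$k" using eig2 by simp
  then have "s * z$k \<le> (den z - 1) * z$k" using zz(3) by metis
  then have "s \<le> den z - 1" using zk by simp
  then show ?thesis using zz(1) znz eig2 by blast
qed

lemma pf_lower:
  fixes B :: "real^'n^'n"
  assumes B0: "\<forall>i j. 0 \<le> B$i$j" and y0: "\<forall>i. 0 \<le> y$i" and ynz: "y \<noteq> 0"
    and By: "\<forall>i. s * y$i \<le> (B *v y)$i"
  shows "s \<le> spectral_radius B"
proof -
  obtain z c where z: "\<forall>i. 0 \<le> z$i" "z \<noteq> 0" "B *v z = c *\<^sub>R z" "s \<le> c"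
    using pf_fixpoint[OF assms] by blast
  define C :: "complex^'n^'n" where "C = (\<chi> i j. complex_of_real (B $ i $ j))"
  define w :: "complex^'n" where "w = (\<chi> i. complex_of_real (z$i))"
  have wnz: "w \<noteq> 0" using z(2) by (auto simp: w_def vec_eq_iff)
  have "C *v w = complex_of_real c *s w"
  proof -
    have "(C *v w)$i = complex_of_real ((B *v z)$i)" for i
      by (simp add: C_def w_def matrix_vector_mult_def)
    then show ?thesis using z(3) by (simp add: vec_eq_iff w_def)
  qed
  then have mem: "cmod (complex_of_real c) \<in> {cmod l | l. \<exists>v :: complex ^ 'n. v \<noteq> 0 \<and>
            (\<chi> i j. complex_of_real (B $ i $ j)) *v v = l *s v}"
    using wnz unfolding C_def by blast
  have fin: "finite {cmod l | l. \<exists>v :: complex ^ 'n. v \<noteq> 0 \<and>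
            (\<chi> i j. complex_of_real (B $ i $ j)) *v v = l *s v}"
  proof -
    have eq: "{cmod l | l. \<exists>v :: complex ^ 'n. v \<noteq> 0 \<and> (\<chi> i j. complex_of_real (B $ i $ j)) *v v = l *s v}
       = cmod ` {l. \<exists>v :: complex ^ 'n. v \<noteq> 0 \<and> (\<chi> i j. complex_of_real (B $ i $ j)) *v v = l *s v}"
      by blast
    show ?thesis unfolding eq by (rule finite_imageI[OF eig_finite])
  qed
  have "cmod (complex_of_real c) \<le> spectral_radius B"
    unfolding spectral_radius_def using Max_ge[OF fin mem] .
  then show ?thesis using z(4) by simp
qed


lemma Dmat_mult: "(Dmat w *v z)$i = sgn (w$i) * z$i"
proof -
  have "(Dmat w *v z)$i = (\<Sum>j\<in>UNIV. (if i = j then sgn (w$i) else 0) * z$j)"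
    by (simp add: matrix_vector_mult_def Dmat_def vsign_def cong: if_cong)
  also have "\<dots> = (\<Sum>j\<in>UNIV. (if i = j then sgn (w$i) * z$j else 0))"
    by (rule sum.cong) auto
  also have "\<dots> = sgn (w$i) * z$i" by simp
  finally show ?thesis .
qed

lemma sgn_mult_self: "sgn (x::real) * x = \<bar>x\<bar>"
  by (cases "x < 0") (auto simp: sgn_if)

lemma vabs_Dmat: "vabs x = Dmat x *v x"
  by (simp add: vec_eq_iff Dmat_mult vabs_def sgn_mult_self)

lemma sgn_mult_le_abs: "sgn (w::real) * x \<le> \<bar>x\<bar>"
  by (cases "w < 0"; cases "w = 0") (auto simp: sgn_if)

lemma G_comp: fixes A :: "real^'n^'n" shows "((A - Dmat w) *v z)$i = ((A - mat 1) *v z)$i + (1 - sgn (w$i)) * z$i"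
  by (simp add: matrix_vector_mult_diff_rdistrib Dmat_mult algebra_simps)

lemma M_comp: fixes A :: "real^'n^'n" shows "((A - mat 1) *v z)$i = (A *v z)$i - z$i"
  by (simp add: matrix_vector_mult_diff_rdistrib)

definition KK :: "real^'n^'n \<Rightarrow> bool \<Rightarrow> bool" where
  "KK A sb \<longleftrightarrow> (\<forall>z. (\<forall>i. z$i < 0 \<longrightarrow> 0 \<le> ((A - mat 1) *v z)$i) \<longrightarrow>
      (sb \<longrightarrow> (\<exists>k. z$k < 0 \<longrightarrow> 0 < ((A - mat 1) *v z)$k)) \<longrightarrow> (\<forall>i. 0 \<le> z$i))"

lemma mono_G:
  fixes A :: "real^'n^'n"
  assumes KK: "KK A sb" and good: "sb \<longrightarrow> (\<exists>k. w$k \<le> 0)"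
    and G: "\<forall>i. 0 \<le> ((A - Dmat w) *v z)$i"
  shows "\<forall>i. 0 \<le> z$i"
proof -
  have h1: "\<forall>i. z$i < 0 \<longrightarrow> 0 \<le> ((A - mat 1) *v z)$i"
  proof (intro allI impI)
    fix i assume zi: "z$i < 0"
    have "0 \<le> 1 - sgn (w$i)" by (simp add: sgn_if)
    then have "(1 - sgn (w$i)) * z$i \<le> 0" using zi by (simp add: mult_nonneg_nonpos)
    then show "0 \<le> ((A - mat 1) *v z)$i" using G[rule_format, of i] unfolding G_comp by linarith
  qed
  have h2: "sb \<longrightarrow> (\<exists>k. z$k < 0 \<longrightarrow> 0 < ((A - mat 1) *v z)$k)"
  proof
    assume sb
    then obtain k where wk: "w$k \<le> 0" using good by blast
    have "z$k < 0 \<longrightarrow> 0 < ((A - mat 1) *v z)$k"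
    proof
      assume zk: "z$k < 0"
      have "1 \<le> 1 - sgn (w$k)" using wk by (simp add: sgn_if)
      then have "(1 - sgn (w$k)) * z$k < 0" using zk by (intro mult_pos_neg) linarith+
      then show "0 < ((A - mat 1) *v z)$k" using G[rule_format, of k] unfolding G_comp by linarith
    qed
    then show "\<exists>k. z$k < 0 \<longrightarrow> 0 < ((A - mat 1) *v z)$k" by blast
  qed
  show ?thesis using KK h1 h2 unfolding KK_def by blast
qed

lemma inv_G:
  fixes A :: "real^'n^'n"
  assumes KK: "KK A sb" and good: "sb \<longrightarrow> (\<exists>k. w$k \<le> 0)"
  shows "invertible (A - Dmat w)"
  unfolding invertible_left_inverse matrix_left_invertible_ker
proof (intro allI impI)
  fix z assume z: "(A - Dmat w) *v z = 0"
  have "\<forall>i. 0 \<le> z$i" using mono_G[OF KK good] z by simp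
  moreover have "(A - Dmat w) *v (- z) = 0"
  proof -
    have "(A - Dmat w) *v (0 - z) = (A - Dmat w) *v 0 - (A - Dmat w) *v z"
      by (rule matrix_vector_mult_diff_distrib)
    then show ?thesis using z by simp
  qed
  then have "\<forall>i. 0 \<le> (- z)$i" using mono_G[OF KK good, of "- z"] by simp
  ultimately show "z = 0" by (simp add: vec_eq_iff order_antisym)
qed

lemma inv_solve:
  fixes G :: "real^'n^'n"
  assumes "invertible G"
  shows "G *v (matrix_inv G *v b) = b"
proof -
  have "G ** matrix_inv G = mat 1"
    using assms unfolding invertible_def matrix_inv_def by (rule someI2_ex) blast
  then show ?thesis by (simp add: matrix_vector_mul_assoc)
qed



definition VV :: "real^'n^'n \<Rightarrow> real^'n \<Rightarrow> bool \<Rightarrow> bool" where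
  "VV A b sb \<longleftrightarrow> (sb \<longrightarrow> (\<forall>x w. (A - Dmat w) *v x = b \<longrightarrow> (\<exists>k. x$k < 0)))"

lemma uniq:
  fixes A :: "real^'n^'n"
  assumes KK: "KK A sb" and VV: "VV A b sb"
    and x: "A *v x - vabs x = b" and y: "A *v y - vabs y = b"
  shows "\<forall>i. 0 \<le> (x - y)$i"
proof -
  let ?z = "x - y"
  have Az: "(A *v ?z)$i = \<bar>x$i\<bar> - \<bar>y$i\<bar>" for i
  proof -
    have "(A *v x)$i - \<bar>x$i\<bar> = b$i" "(A *v y)$i - \<bar>y$i\<bar> = b$i"
      using x y by (auto simp: vec_eq_iff vabs_def)
    then show ?thesis by (simp add: matrix_vector_mult_diff_distrib)
  qed
  have Mz: "((A - mat 1) *v ?z)$i = \<bar>x$i\<bar> - \<bar>y$i\<bar> - (x$i - y$i)" for i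
    unfolding M_comp Az by simp
  have h1: "\<forall>i. ?z$i < 0 \<longrightarrow> 0 \<le> ((A - mat 1) *v ?z)$i"
    unfolding Mz by auto
  have h2: "sb \<longrightarrow> (\<exists>k. ?z$k < 0 \<longrightarrow> 0 < ((A - mat 1) *v ?z)$k)"
  proof
    assume sb
    have "(A - Dmat x) *v x = b" using x by (simp add: matrix_vector_mult_diff_rdistrib vabs_Dmat)
    then obtain k where xk: "x$k < 0" using VV \<open>sb\<close> unfolding VV_def by blast
    have "?z$k < 0 \<longrightarrow> 0 < ((A - mat 1) *v ?z)$k"
      unfolding Mz using xk by auto
    then show "\<exists>k. ?z$k < 0 \<longrightarrow> 0 < ((A - mat 1) *v ?z)$k" by blast
  qed
  show ?thesis using KK h1 h2 unfolding KK_def by blast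
qed

lemma gen:
  fixes A :: "real^'n^'n"
  assumes KK: "KK A sb" and VV: "VV A b sb" and g0: "sb \<longrightarrow> (\<exists>k. x0$k \<le> 0)"
  shows "(\<forall>k. invertible (A - Dmat (gn_iter A b x0 k))) \<and>
         (\<exists>!xs. A *v xs - vabs xs = b) \<and>
         (\<exists>xs. A *v xs - vabs xs = b \<and>
               (\<forall>k\<ge>CARD('n) + 2 - (if sb then 1 else 0). gn_iter A b x0 k = xs))"
proof -
  define x where "x = gn_iter A b x0"
  define F where "F z = A *v z - vabs z" for z
  define G where "G k = A - Dmat (x k)" for k
  have xs: "x (Suc k) = matrix_inv (G k) *v b" for k by (simp add: x_def G_def)
  have good: "sb \<longrightarrow> (\<exists>i. x k $ i \<le> 0)" for k
  proof (induction k)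
    case 0 then show ?case using g0 by (simp add: x_def)
  next
    case (Suc k)
    have "invertible (G k)" unfolding G_def using inv_G[OF KK Suc] .
    then have "G k *v x (Suc k) = b" unfolding xs by (rule inv_solve)
    then have "sb \<longrightarrow> (\<exists>i. x (Suc k) $ i < 0)" using VV unfolding VV_def G_def by blast
    then show ?case by (blast intro: less_imp_le)
  qed
  have inv: "invertible (G k)" for k unfolding G_def using inv_G[OF KK good] .
  have S1: "G k *v x (Suc k) = b" for k unfolding xs using inv by (rule inv_solve)
  have S1c: "(A *v x (Suc k))$i - sgn (x k $ i) * x (Suc k) $ i = b$i" for k i
  proof -
    have "(G k *v x (Suc k))$i = b$i" using S1 by simp
    then show ?thesis unfolding G_def by (simp add: matrix_vector_mult_diff_rdistrib Dmat_mult)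
  qed
  have Fc: "F z $ i = (A *v z)$i - \<bar>z$i\<bar>" for z i by (simp add: F_def vabs_def)
  have S2: "F (x (Suc k)) $ i \<le> b$i" for k i
    unfolding Fc using S1c[of k i] sgn_mult_le_abs[of "x k $ i" "x (Suc k) $ i"] by linarith
  have GF: "G k *v x k = F (x k)" for k
    by (simp add: G_def F_def matrix_vector_mult_diff_rdistrib vabs_Dmat)
  have S3: "x k $ i \<le> x (Suc k) $ i" if k1: "1 \<le> k" for k i
  proof -
    obtain j where kj: "k = Suc j" using k1 by (cases k) simp_all
    have "\<forall>i. 0 \<le> ((A - Dmat (x k)) *v (x (Suc k) - x k))$i"
    proof
      fix i
      have "(G k *v (x (Suc k) - x k))$i = b$i - F (x k) $ i"
        by (simp add: matrix_vector_mult_diff_distrib S1 GF)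
      then show "0 \<le> ((A - Dmat (x k)) *v (x (Suc k) - x k))$i"
        using S2[of j i] unfolding G_def kj by simp
    qed
    from mono_G[OF KK good this] show ?thesis by simp
  qed
  have S4: "x (Suc k) = x k" if "F (x k) = b" for k
  proof -
    have "G k *v x (Suc k) = G k *v x k" using S1 GF that by simp
    then show ?thesis using inj_matrix_vector_mult[OF inv[of k]] by (simp add: inj_eq)
  qed
  have S4': "x j = x k" if "F (x k) = b" "k \<le> j" for j k
    using that(2)
  proof (induction j)
    case 0 then show ?case by simp
  next
    case (Suc j)
    show ?case
    proof (cases "k = Suc j")
      case False
      then have kj: "k \<le> j" using Suc.prems by simp
      then have "x j = x k" by (rule Suc.IH)
      then show ?thesis using S4[of j] that(1) by simp
    qed simp
  qed
  define P where "P k = {i. 0 < x k $ i}" for k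
  have S5: "\<exists>i. i \<notin> P k \<and> i \<in> P (Suc k)" if k1: "1 \<le> k" and k2: "F (x (Suc k)) \<noteq> b" for k
  proof -
    obtain i where ne: "F (x (Suc k)) $ i \<noteq> b $ i" using k2 by (auto simp: vec_eq_iff)
    have ne2: "\<bar>x (Suc k) $ i\<bar> \<noteq> sgn (x k $ i) * x (Suc k) $ i"
      using ne S1c[of k i] unfolding Fc by linarith
    have le: "x k $ i \<le> x (Suc k) $ i" using S3[OF k1] .
    have "0 < x (Suc k) $ i \<and> \<not> 0 < x k $ i"
      using ne2 le by (cases "x (Suc k) $ i < 0"; cases "x (Suc k) $ i = 0"; cases "x k $ i < 0"; cases "x k $ i = 0") (auto simp: sgn_if)
    then show ?thesis unfolding P_def by auto
  qed
  have Pmono: "P k \<subseteq> P (Suc k)" if "1 \<le> k" for k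
    using S3[OF that] unfolding P_def by (auto intro: less_le_trans)
  have S6: "m \<le> card (P (Suc m))" if "\<forall>j. 1 \<le> j \<and> j \<le> m \<longrightarrow> F (x (Suc j)) \<noteq> b" for m
    using that
  proof (induction m)
    case 0 then show ?case by simp
  next
    case (Suc m)
    have IH: "m \<le> card (P (Suc m))" using Suc by auto
    obtain i where i: "i \<notin> P (Suc m)" "i \<in> P (Suc (Suc m))"
      using S5[of "Suc m"] Suc.prems by auto
    have "P (Suc m) \<subset> P (Suc (Suc m))" using Pmono[of "Suc m"] i by auto
    then have "card (P (Suc m)) < card (P (Suc (Suc m)))" by (rule psubset_card_mono[OF finite])
    then show ?case using IH by simp
  qed
  define e :: nat where "e = (if sb then 1 else 0)"
  define N where "N = CARD('n) + 1 - e"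
  have cnt: "card (P k) + e \<le> CARD('n)" for k
  proof (cases sb)
    case True
    then obtain i where "x k $ i \<le> 0" using good by blast
    then have "P k \<subseteq> UNIV - {i}" unfolding P_def by auto
    then have "card (P k) \<le> card (UNIV - {i} :: 'n set)" by (rule card_mono[rotated]) simp
    then have c1: "card (P k) \<le> CARD('n) - 1" by simp
    have c2: "0 < CARD('n)" by simp
    from c1 c2 have "card (P k) + 1 \<le> CARD('n)" by linarith
    then show ?thesis using True by (simp add: e_def)
  next
    case False
    have "card (P k) \<le> CARD('n)" by (rule card_mono) auto
    then show ?thesis using False by (simp add: e_def)
  qed
  have "\<exists>j. 1 \<le> j \<and> j \<le> N \<and> F (x (Suc j)) = b"
  proof (rule ccontr)
    assume "\<not> ?thesis"
    then have "N \<le> card (P (Suc N))" using S6[of N] by blast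
    moreover have "card (P (Suc N)) + e \<le> CARD('n)" by (rule cnt)
    moreover have "e \<le> 1" by (simp add: e_def)
    ultimately show False unfolding N_def by simp
  qed
  then obtain j where j: "1 \<le> j" "j \<le> N" "F (x (Suc j)) = b" by blast
  have fin: "\<forall>k\<ge>CARD('n) + 2 - e. x k = x (Suc j)"
  proof (intro allI impI)
    fix k assume "CARD('n) + 2 - e \<le> k"
    then have "Suc j \<le> k" using j(2) unfolding N_def e_def by (auto split: if_splits)
    then show "x k = x (Suc j)" using S4'[OF j(3)] by blast
  qed
  have uq: "\<exists>!xs. A *v xs - vabs xs = b"
  proof (rule ex_ex1I)
    show "\<exists>xs. A *v xs - vabs xs = b" using j(3) unfolding F_def by blast
  next
    fix y z assume "A *v y - vabs y = b" "A *v z - vabs z = b"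
    then have "\<forall>i. 0 \<le> (y - z)$i" "\<forall>i. 0 \<le> (z - y)$i" using uniq[OF KK VV] by blast+
    then show "y = z" by (simp add: vec_eq_iff order_antisym)
  qed
  show ?thesis
    using inv uq fin j(3) unfolding G_def x_def F_def e_def by blast
qed



lemma dec_comp:
  fixes A B :: "real^'n^'n"
  assumes dec: "A - mat 1 = s *\<^sub>R mat 1 - B"
  shows "((A - mat 1) *v z)$i = s * z$i - (B *v z)$i"
proof -
  have "(A - mat 1) *v z = s *\<^sub>R z - B *v z"
    unfolding dec by (simp add: matrix_vector_mult_diff_rdistrib scaleR_matrix_vector_assoc[symmetric])
  then show ?thesis by simp
qed

lemma dec_ent:
  fixes A B :: "real^'n^'n"
  assumes dec: "A - mat 1 = s *\<^sub>R mat 1 - B"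
  shows "(A - mat 1)$i$j = (if i = j then s else 0) - B$i$j"
proof -
  have "(A - mat 1)$i$j = (s *\<^sub>R mat 1 - B)$i$j" using dec by simp
  then show ?thesis by (simp add: mat_def)
qed

lemma negpart:
  fixes A B :: "real^'n^'n" and z :: "real^'n"
  assumes B0: "\<forall>i j. 0 \<le> B$i$j" and dec: "A - mat 1 = s *\<^sub>R mat 1 - B"
  defines "y \<equiv> (\<chi> i. max (-(z$i)) 0)"
  shows "z$i < 0 \<Longrightarrow> ((A - mat 1) *v z)$i \<le> (B *v y)$i - s * y$i"
    and "0 \<le> z$i \<Longrightarrow> 0 \<le> (B *v y)$i - s * y$i"
proof -
  have Bz: "- (B *v y)$i \<le> (B *v z)$i"
  proof -
    have "(\<Sum>j\<in>UNIV. B$i$j * (- y$j)) \<le> (\<Sum>j\<in>UNIV. B$i$j * z$j)"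
    proof (rule sum_mono)
      fix j
      have "- y$j \<le> z$j" by (simp add: y_def)
      then show "B$i$j * (- y$j) \<le> B$i$j * z$j" by (rule mult_left_mono) (use B0 in blast)
    qed
    then show ?thesis by (simp add: matrix_vector_mult_def sum_negf)
  qed
  have By: "0 \<le> (B *v y)$i"
    unfolding matrix_vector_mult_def using B0 by (auto intro!: sum_nonneg simp: y_def)
  show "z$i < 0 \<Longrightarrow> ((A - mat 1) *v z)$i \<le> (B *v y)$i - s * y$i"
    using Bz unfolding dec_comp[OF dec] by (simp add: y_def)
  show "0 \<le> z$i \<Longrightarrow> 0 \<le> (B *v y)$i - s * y$i"
    using By by (simp add: y_def)
qed

lemma KKa:
  fixes A :: "real^'n^'n"
  assumes "nonsingular_M_matrix (A - mat 1)"
  shows "KK A False"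
proof -
  obtain s B where B0: "\<forall>i j. 0 \<le> B$i$j" and dec: "A - mat 1 = s *\<^sub>R mat 1 - B"
    and sr: "s > spectral_radius B"
    using assms unfolding nonsingular_M_matrix_def nonneg_matrix_def by blast
  show ?thesis unfolding KK_def
  proof (intro allI impI)
    fix z :: "real^'n" and i
    assume h: "\<forall>i. z$i < 0 \<longrightarrow> 0 \<le> ((A - mat 1) *v z)$i"
    show "0 \<le> z$i"
    proof (rule ccontr)
      assume "\<not> 0 \<le> z$i"
      define y where "y = (\<chi> i. max (-(z$i)) 0)"
      have y0: "\<forall>i. 0 \<le> y$i" by (simp add: y_def)
      have "y$i \<noteq> 0" using \<open>\<not> 0 \<le> z$i\<close> by (simp add: y_def)
      then have ynz: "y \<noteq> 0" by auto
      have "\<forall>j. s * y$j \<le> (B *v y)$j"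
      proof
        fix j
        show "s * y$j \<le> (B *v y)$j"
        proof (cases "z$j < 0")
          case True
          then show ?thesis using h negpart(1)[OF B0 dec, of z j] unfolding y_def by fastforce
        next
          case False
          then show ?thesis using negpart(2)[OF B0 dec, of z j] unfolding y_def by simp
        qed
      qed
      then have "s \<le> spectral_radius B" using pf_lower[OF B0 y0 ynz] by blast
      then show False using sr by simp
    qed
  qed
qed

lemma transp_eq:
  fixes A :: "real^'n^'n"
  assumes "(transpose A - mat 1) *v v = 0"
  shows "(\<Sum>i\<in>UNIV. v$i * A$i$j) = v$j"
proof -
  have "((transpose A - mat 1) *v v)$j = 0" using assms by simp
  then have "(transpose A *v v)$j = v$j" by (simp add: matrix_vector_mult_diff_rdistrib)
  then show ?thesis by (simp add: matrix_vector_mult_def transpose_def mult.commute)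
qed

lemma vA:
  fixes A :: "real^'n^'n"
  assumes "(transpose A - mat 1) *v v = 0"
  shows "(\<Sum>i\<in>UNIV. v$i * (A *v x)$i) = (\<Sum>j\<in>UNIV. v$j * x$j)"
proof -
  have "(\<Sum>i\<in>UNIV. v$i * (A *v x)$i) = (\<Sum>i\<in>UNIV. \<Sum>j\<in>UNIV. v$i * A$i$j * x$j)"
    by (simp add: matrix_vector_mult_def sum_distrib_left mult.assoc)
  also have "\<dots> = (\<Sum>j\<in>UNIV. \<Sum>i\<in>UNIV. v$i * A$i$j * x$j)" by (rule sum.swap)
  also have "\<dots> = (\<Sum>j\<in>UNIV. (\<Sum>i\<in>UNIV. v$i * A$i$j) * x$j)" by (simp add: sum_distrib_right)
  also have "\<dots> = (\<Sum>j\<in>UNIV. v$j * x$j)" using transp_eq[OF assms] by simp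
  finally show ?thesis .
qed

lemma VVb:
  fixes A :: "real^'n^'n"
  assumes tr: "(transpose A - mat 1) *v v = 0" and vpos: "\<forall>i. v$i > 0" and vb: "v \<bullet> b < 0"
  shows "VV A b True"
  unfolding VV_def
proof (intro impI allI)
  fix x w assume eq: "(A - Dmat w) *v x = b"
  show "\<exists>k. x$k < 0"
  proof (rule ccontr)
    assume "\<not> ?thesis"
    then have xn: "\<forall>k. 0 \<le> x$k" by (simp add: not_less)
    have bi: "b$i = (A *v x)$i - sgn (w$i) * x$i" for i
      using eq[symmetric] by (simp add: matrix_vector_mult_diff_rdistrib Dmat_mult)
    have "v \<bullet> b = (\<Sum>i\<in>UNIV. v$i * b$i)" by (simp add: inner_vec_def)
    also have "\<dots> = (\<Sum>i\<in>UNIV. v$i * (A *v x)$i) - (\<Sum>i\<in>UNIV. v$i * (sgn (w$i) * x$i))"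
      by (simp add: bi right_diff_distrib sum_subtractf)
    also have "\<dots> = (\<Sum>i\<in>UNIV. v$i * ((1 - sgn (w$i)) * x$i))"
      unfolding vA[OF tr] by (simp add: algebra_simps sum_subtractf)
    also have "\<dots> \<ge> 0"
    proof (rule sum_nonneg)
      fix i
      have "0 \<le> 1 - sgn (w$i)" by (simp add: sgn_if)
      then show "0 \<le> v$i * ((1 - sgn (w$i)) * x$i)" using vpos xn by (simp add: less_imp_le)
    qed
    finally show False using vb by simp
  qed
qed



lemma KKb:
  fixes A :: "real^'n^'n"
  assumes irr: "irreducible_mat (A - mat 1)" and sing: "singular_M_matrix (A - mat 1)"
    and vpos: "\<forall>i. v$i > 0" and tr: "(transpose A - mat 1) *v v = 0"
  shows "KK A True"
proof -
  obtain s B where B0: "\<forall>i j. 0 \<le> B$i$j" and dec: "A - mat 1 = s *\<^sub>R mat 1 - B"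
    using sing unfolding singular_M_matrix_def nonneg_matrix_def by blast
  have vB: "(\<Sum>i\<in>UNIV. v$i * B$i$j) = s * v$j" for j
  proof -
    have Aij: "A$i$j = (if i = j then 1 + s else 0) - B$i$j" for i
    proof -
      have "(A - mat 1)$i$j = (if i = j then s else 0) - B$i$j" by (rule dec_ent[OF dec])
      then show ?thesis by (simp add: mat_def split: if_splits)
    qed
    have "(\<Sum>i\<in>UNIV. v$i * A$i$j) = v$j" by (rule transp_eq[OF tr])
    moreover have "(\<Sum>i\<in>UNIV. v$i * A$i$j) = (\<Sum>i\<in>UNIV. (if i = j then v$i * (1 + s) else 0) - v$i * B$i$j)"
      unfolding Aij by (rule sum.cong) (auto simp: algebra_simps)
    moreover have "\<dots> = v$j * (1 + s) - (\<Sum>i\<in>UNIV. v$i * B$i$j)"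
      by (simp add: sum_subtractf)
    ultimately show ?thesis by (simp add: algebra_simps)
  qed
  show ?thesis unfolding KK_def
  proof (intro allI impI)
    fix z :: "real^'n" and i0
    assume h1: "\<forall>i. z$i < 0 \<longrightarrow> 0 \<le> ((A - mat 1) *v z)$i"
      and h2: "True \<longrightarrow> (\<exists>k. z$k < 0 \<longrightarrow> 0 < ((A - mat 1) *v z)$k)"
    show "0 \<le> z$i0"
    proof (rule ccontr)
      assume zi0: "\<not> 0 \<le> z$i0"
      define y where "y = (\<chi> i. max (-(z$i)) 0)"
      define e where "e i = (B *v y)$i - s * y$i" for i
      have e_ge: "z$i < 0 \<Longrightarrow> ((A - mat 1) *v z)$i \<le> e i" for i
        using negpart(1)[OF B0 dec, of z i] unfolding y_def e_def by simp
      have e0: "0 \<le> e i" for i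
      proof (cases "z$i < 0")
        case True then show ?thesis using h1 e_ge[of i] by fastforce
      next
        case False then show ?thesis using negpart(2)[OF B0 dec, of z i] unfolding y_def e_def by simp
      qed
      have sumz: "(\<Sum>i\<in>UNIV. v$i * e i) = 0"
      proof -
        have "(\<Sum>i\<in>UNIV. v$i * (B *v y)$i) = (\<Sum>i\<in>UNIV. \<Sum>j\<in>UNIV. v$i * B$i$j * y$j)"
          by (simp add: matrix_vector_mult_def sum_distrib_left mult.assoc)
        also have "\<dots> = (\<Sum>j\<in>UNIV. \<Sum>i\<in>UNIV. v$i * B$i$j * y$j)" by (rule sum.swap)
        also have "\<dots> = (\<Sum>j\<in>UNIV. (\<Sum>i\<in>UNIV. v$i * B$i$j) * y$j)" by (simp add: sum_distrib_right)
        also have "\<dots> = (\<Sum>j\<in>UNIV. s * v$j * y$j)" using vB by simp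
        finally have "(\<Sum>i\<in>UNIV. v$i * (B *v y)$i) = (\<Sum>j\<in>UNIV. s * v$j * y$j)" .
        then show ?thesis unfolding e_def
          by (simp add: right_diff_distrib sum_subtractf algebra_simps)
      qed
      have ez: "e i = 0" for i
      proof -
        have "\<forall>i\<in>UNIV. v$i * e i = 0"
          using sum_nonneg_eq_0_iff[of UNIV "\<lambda>i. v$i * e i"] sumz e0 vpos
          by (simp add: less_imp_le)
        then have "v$i = 0 \<or> e i = 0" by simp
        moreover have "v$i \<noteq> 0" using vpos[rule_format, of i] by simp
        ultimately show ?thesis by blast
      qed
      obtain k where hk: "z$k < 0 \<longrightarrow> 0 < ((A - mat 1) *v z)$k" using h2 by blast
      have zk: "0 \<le> z$k"
      proof (rule ccontr)
        assume "\<not> 0 \<le> z$k"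
        then have "0 < ((A - mat 1) *v z)$k" "((A - mat 1) *v z)$k \<le> e k" using hk e_ge[of k] by auto
        then show False using ez[of k] by simp
      qed
      have "reducible (A - mat 1)"
        unfolding reducible_def
      proof (intro exI conjI)
        show "{i. z$i < 0} \<noteq> {}" using zi0 not_le by blast
        show "{i. 0 \<le> z$i} \<noteq> {}" using zk by auto
        show "{i. z$i < 0} \<inter> {i. 0 \<le> z$i} = {}" by auto
        show "{i. z$i < 0} \<union> {i. 0 \<le> z$i} = UNIV" by auto
        show "\<forall>j\<in>{i. 0 \<le> z$i}. \<forall>i\<in>{i. z$i < 0}. (A - mat 1)$j$i = 0"
        proof (intro ballI)
          fix j i assume j: "j \<in> {i. 0 \<le> z$i}" and i: "i \<in> {i. z$i < 0}"
          have ji: "j \<noteq> i" using i j by auto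
          have yj: "y$j = 0" using j by (simp add: y_def)
          have yi: "0 < y$i" using i by (simp add: y_def)
          have "(B *v y)$j = 0" using ez[of j] yj unfolding e_def by simp
          then have "(\<Sum>l\<in>UNIV. B$j$l * y$l) = 0" by (simp add: matrix_vector_mult_def)
          moreover have nn: "\<forall>l\<in>UNIV. 0 \<le> B$j$l * y$l" using B0 by (simp add: y_def)
          have "(\<Sum>l\<in>UNIV. B$j$l * y$l) = 0 \<longleftrightarrow> (\<forall>l\<in>UNIV. B$j$l * y$l = 0)"
            by (rule sum_nonneg_eq_0_iff) (use nn in auto)
          ultimately have "\<forall>l\<in>UNIV. B$j$l * y$l = 0" by blast
          then have "B$j$i = 0 \<or> y$i = 0" by simp
          then have "B$j$i = 0" using yi by auto
          then show "(A - mat 1)$j$i = 0" using dec_ent[OF dec, of j i] ji by simp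
        qed
      qed
      then show False using irr unfolding irreducible_mat_def by blast
    qed
  qed
qed

theorem theorem4p2:
  fixes A :: "real ^ 'n ^ 'n" and b :: "real ^ 'n"
  shows
   "(nonsingular_M_matrix (A - mat 1) \<longrightarrow>
      (\<forall>x0. (\<forall>k. invertible (A - Dmat (gn_iter A b x0 k))) \<and>
            (\<exists>!xs. A *v xs - vabs xs = b) \<and>
            (\<exists>xs. A *v xs - vabs xs = b \<and>
                  (\<forall>k\<ge>CARD('n) + 2. gn_iter A b x0 k = xs))))
    \<and>
    (\<forall>v. irreducible_mat (A - mat 1) \<and> singular_M_matrix (A - mat 1) \<and>
         (\<forall>i. v $ i > 0) \<and> (transpose A - mat 1) *v v = 0 \<and> v \<bullet> b < 0 \<longrightarrow>
      (\<forall>x0. Dmat x0 \<noteq> mat 1 \<longrightarrow>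
            (\<forall>k. invertible (A - Dmat (gn_iter A b x0 k))) \<and>
            (\<exists>!xs. A *v xs - vabs xs = b) \<and>
            (\<exists>xs. A *v xs - vabs xs = b \<and>
                  (\<forall>k\<ge>CARD('n) + 1. gn_iter A b x0 k = xs))))"
proof (rule conjI; intro impI allI)
  fix x0 :: "real^'n"
  assume "nonsingular_M_matrix (A - mat 1)"
  then have KK: "KK A False" by (rule KKa)
  have VV: "VV A b False" by (simp add: VV_def)
  have g0: "False \<longrightarrow> (\<exists>k. x0$k \<le> 0)" by simp
  from gen[OF KK VV g0]
  show "(\<forall>k. invertible (A - Dmat (gn_iter A b x0 k))) \<and>
            (\<exists>!xs. A *v xs - vabs xs = b) \<and>
            (\<exists>xs. A *v xs - vabs xs = b \<and>
                  (\<forall>k\<ge>CARD('n) + 2. gn_iter A b x0 k = xs))" by simp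
next
  fix v x0 :: "real^'n"
  assume H: "irreducible_mat (A - mat 1) \<and> singular_M_matrix (A - mat 1) \<and>
         (\<forall>i. v $ i > 0) \<and> (transpose A - mat 1) *v v = 0 \<and> v \<bullet> b < 0"
    and D: "Dmat x0 \<noteq> mat 1"
  have KK: "KK A True" using KKb H by blast
  have VV: "VV A b True" using VVb H by blast
  have g0: "\<exists>k. x0$k \<le> 0"
  proof (rule ccontr)
    assume "\<not> ?thesis"
    then have "\<forall>k. 0 < x0$k" by (simp add: not_le)
    then have "Dmat x0 = mat 1" by (simp add: vec_eq_iff Dmat_def vsign_def mat_def)
    then show False using D by simp
  qed
  from gen[OF KK VV] g0
  show "(\<forall>k. invertible (A - Dmat (gn_iter A b x0 k))) \<and>
            (\<exists>!xs. A *v xs - vabs xs = b) \<and>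
            (\<exists>xs. A *v xs - vabs xs = b \<and>
                  (\<forall>k\<ge>CARD('n) + 1. gn_iter A b x0 k = xs))" by simp
qed

end
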